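(* Let $n\ge 2$ and let $\dot{\mathbf x}=\mathbf f(\sigma,\mathbf x)$ be a multistable regulatory system (MSRS) as defined in the context, with $f_k(\sigma,\mathbf x)=-l(x_k)+\sigma\frac{g(x_k)}{P(x_1,\dots,x_n)+h(x_k)}$; fix $\sigma>0$ and let $\mathbf r\in\mathbb R_{>0}^n$ be an equilibrium. For $k=1,\dots,n$ let $D_k(\mathbf x)=-\frac{P(\mathbf x)+h(x_k)}{l(x_k)}$. (1) If $\mathbf r=(q,\dots,q)$ is diagonal, set $\tau=\frac{\partial f_n}{\partial x_n}(\mathbf r)$, $\xi=\frac{\partial P}{\partial x_{n-1}}(\mathbf r)/D_n(\mathbf r)$, $G_1=\tau-\xi$, $G_2=\tau+(n-1)\xi$. Then $\mathbf r$ is stable if and only if $G_1<0$ and $G_2<0$. (2),(3) Otherwise, suppose the coordinates of $\mathbf r$ take the value $p$ exactly $i$ times and the value $q\neq p$ exactly $n-i$ times with $1\le i\le\lfloor n/2\rfloor$. Let $\boldsymbol\rho=(p,\dots,p,q,\dots,q)$ ($p$ in the first $i$ coordinates), and set $\beta=\frac{\partial f_1}{\partial x_1}(\boldsymbol\rho)$, $\tau=\frac{\partial f_n}{\partial x_n}(\boldsymbol\rho)$, $\gamma=\frac{\partial P}{\partial x_2}(\boldsymbol\rho)/D_1(\boldsymbol\rho)$, $\xi=\frac{\partial P}{\partial x_{n-1}}(\boldsymbol\rho)/D_n(\boldsymbol\rho)$, $\mu=\frac{\partial P}{\partial x_n}(\boldsymbol\rho)/D_1(\boldsymbol\rho)$,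 $\nu=\frac{\partial P}{\partial x_1}(\boldsymbol\rho)/D_n(\boldsymbol\rho)$, $G_1=\tau-\xi$, $G_2=\beta-\gamma$, $G_3=\beta+\tau+(i-1)\gamma+(n-i-1)\xi$, $G_4=(\beta+(i-1)\gamma)(\tau+(n-i-1)\xi)-i(n-i)\mu\nu$. Then: (2a) if $i=1$ and $n=2$, $\mathbf r$ is stable if and only if $G_3<0$ and $G_4>0$; (2b) if $i=1$ and $n>2$, $\mathbf r$ is stable if and only if $G_1<0$, $G_3<0$ and $G_4>0$; (3) if $2\le i\le\lfloor n/2\rfloor$, $\mathbf r$ is stable if and only if $G_1<0$, $G_2<0$, $G_3<0$ and $G_4>0$.
   Context: A system of ODEs $\frac{dx_k}{dt}=f_k(\sigma,x_1,\dots,x_n)$, $k=1,\dots,n$, is called a multistable regulatory system (MSRS) if $f_k(\sigma,x_1,\dots,x_n)=-l(x_k)+\sigma\frac{g(x_k)}{P(x_1,\dots,x_n)+h(x_k)}$, where $l,g,h$ are real functions of one real variable and $P$ is a real function of $n$ real variables (all differentiable), and: (1) $\sigma$ is a positive parameter; (2) $P$ is symmetric, i.e. unchanged under interchanging any two of its arguments; (3) for every $k$ and every $(x_1,\dots,x_n)\in\mathbb R_{>0}^n$, $P(x_1,\dots,x_n)+h(x_k)>0$; (4) $l(z)\neq 0$ and for every $\sigma>0$ the function $z\mapsto \sigma\frac{g(z)}{l(z)}-h(z)$ has at most one extreme point for $z\in\mathbb R_{>0}$. For a given $\sigma$, a point $\mathbf r\in\mathbb R_{>0}^n$ is an equilibrium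 if $f_1(\sigma,\mathbf r)=\dots=f_n(\sigma,\mathbf r)=0$. An equilibrium $\mathbf r$ is stable (locally asymptotically stable) if all eigenvalues of the Jacobian matrix $J_{\mathbf f}(\mathbf r)=\left[\frac{\partial f_i}{\partial x_j}(\mathbf r)\right]_{i,j=1}^n$ have strictly negative real parts. An equilibrium is diagonal if all its coordinates are equal. *)

theory Defs
  imports "HOL-Analysis.Analysis" "Jordan_Normal_Form.Char_Poly"
begin

(* Points of R^n are encoded as functions nat => real; only the coordinates
   0,...,n-1 matter (coordinate k here is x_{k+1} of the paper). *)

definition pos_pt :: "nat \<Rightarrow> (nat \<Rightarrow> real) \<Rightarrow> bool" where
  "pos_pt n x \<longleftrightarrow> (\<forall>k<n. x k > 0)"

definition partial :: "((nat \<Rightarrow> real) \<Rightarrow> real) \<Rightarrow> nat \<Rightarrow> (nat \<Rightarrow> real) \<Rightarrow> real" where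
  "partial F j x = deriv (\<lambda>t. F (x(j := t))) (x j)"

definition differentiable_n :: "nat \<Rightarrow> ((nat \<Rightarrow> real) \<Rightarrow> real) \<Rightarrow> (nat \<Rightarrow> real) \<Rightarrow> bool" where
  "differentiable_n n F x \<longleftrightarrow> (\<exists>c::nat \<Rightarrow> real. \<forall>e>0. \<exists>d>0. \<forall>y.
      (\<forall>k<n. \<bar>y k - x k\<bar> < d) \<and> (\<forall>k. n \<le> k \<longrightarrow> y k = x k) \<longrightarrow>
      \<bar>F y - F x - (\<Sum>k<n. c k * (y k - x k))\<bar> \<le> e * (\<Sum>k<n. \<bar>y k - x k\<bar>))"

definition extreme_point_pos :: "(real \<Rightarrow> real) \<Rightarrow> real \<Rightarrow> bool" where
  "extreme_point_pos F z \<longleftrightarrow> z > 0 \<and> (\<exists>d>0.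
      (\<forall>y. y > 0 \<and> \<bar>y - z\<bar> < d \<longrightarrow> F y \<le> F z) \<or>
      (\<forall>y. y > 0 \<and> \<bar>y - z\<bar> < d \<longrightarrow> F z \<le> F y))"

definition msrs_f :: "(real \<Rightarrow> real) \<Rightarrow> (real \<Rightarrow> real) \<Rightarrow> (real \<Rightarrow> real) \<Rightarrow>
    ((nat \<Rightarrow> real) \<Rightarrow> real) \<Rightarrow> real \<Rightarrow> nat \<Rightarrow> (nat \<Rightarrow> real) \<Rightarrow> real" where
  "msrs_f l g h P \<sigma> k x = - l (x k) + \<sigma> * g (x k) / (P x + h (x k))"

definition MSRS :: "nat \<Rightarrow> (real \<Rightarrow> real) \<Rightarrow> (real \<Rightarrow> real) \<Rightarrow> (real \<Rightarrow> real) \<Rightarrow>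
    ((nat \<Rightarrow> real) \<Rightarrow> real) \<Rightarrow> bool" where
  "MSRS n l g h P \<longleftrightarrow>
     \<comment> \<open>P is a function of the n variables x_0..x_{n-1}\<close>
     (\<forall>x y. (\<forall>k<n. x k = y k) \<longrightarrow> P x = P y) \<and>
     \<comment> \<open>differentiability\<close>
     (\<forall>z>0. l differentiable (at z) \<and> g differentiable (at z) \<and> h differentiable (at z)) \<and>
     (\<forall>x. pos_pt n x \<longrightarrow> differentiable_n n P x) \<and>
     \<comment> \<open>(2) symmetry\<close>
     (\<forall>x a b. a < n \<and> b < n \<longrightarrow> P (x \<circ> Transposition.transpose a b) = P x) \<and>
     \<comment> \<open>(3)\<close>
     (\<forall>x k. pos_pt n x \<and> k < n \<longrightarrow> P x + h (x k) > 0) \<and>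
     \<comment> \<open>(4)\<close>
     (\<forall>z>0. l z \<noteq> 0) \<and>
     (\<forall>\<sigma>>0. \<forall>z1 z2. extreme_point_pos (\<lambda>z. \<sigma> * g z / l z - h z) z1 \<and>
                    extreme_point_pos (\<lambda>z. \<sigma> * g z / l z - h z) z2 \<longrightarrow> z1 = z2)"

definition equilibrium :: "nat \<Rightarrow> (real \<Rightarrow> real) \<Rightarrow> (real \<Rightarrow> real) \<Rightarrow> (real \<Rightarrow> real) \<Rightarrow>
    ((nat \<Rightarrow> real) \<Rightarrow> real) \<Rightarrow> real \<Rightarrow> (nat \<Rightarrow> real) \<Rightarrow> bool" where
  "equilibrium n l g h P \<sigma> r \<longleftrightarrow> pos_pt n r \<and> (\<forall>k<n. msrs_f l g h P \<sigma> k r = 0)"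

definition jacobian :: "nat \<Rightarrow> (nat \<Rightarrow> (nat \<Rightarrow> real) \<Rightarrow> real) \<Rightarrow> (nat \<Rightarrow> real) \<Rightarrow> real mat" where
  "jacobian n f r = mat n n (\<lambda>(i, j). partial (f i) j r)"

(* locally asymptotically stable: all (complex) eigenvalues of the Jacobian have negative real part *)
definition stable_eq :: "nat \<Rightarrow> (real \<Rightarrow> real) \<Rightarrow> (real \<Rightarrow> real) \<Rightarrow> (real \<Rightarrow> real) \<Rightarrow>
    ((nat \<Rightarrow> real) \<Rightarrow> real) \<Rightarrow> real \<Rightarrow> (nat \<Rightarrow> real) \<Rightarrow> bool" where
  "stable_eq n l g h P \<sigma> r \<longleftrightarrow>
     (\<forall>ev::complex. eigenvalue (map_mat complex_of_real (jacobian n (msrs_f l g h P \<sigma>) r)) ev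
        \<longrightarrow> Re ev < 0)"

definition Dk :: "(real \<Rightarrow> real) \<Rightarrow> (real \<Rightarrow> real) \<Rightarrow> ((nat \<Rightarrow> real) \<Rightarrow> real) \<Rightarrow> nat \<Rightarrow> (nat \<Rightarrow> real) \<Rightarrow> real" where
  "Dk l h P k x = - (P x + h (x k)) / l (x k)"

end

theory Submission
  imports Defs
begin


lemma quad_roots:
  fixes T D :: real
  shows "(\<forall>z::complex. z^2 - of_real T * z + of_real D = 0 \<longrightarrow> Re z < 0) \<longleftrightarrow> T < 0 \<and> D > 0"
proof
  assume H: "\<forall>z::complex. z^2 - of_real T * z + of_real D = 0 \<longrightarrow> Re z < 0"
  define d where "d = T^2 - 4*D"
  show "T < 0 \<and> D > 0"
  proof (cases "d \<ge> 0")
    case True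
    define w where "w = (T + sqrt d)/2"
    have sq: "sqrt d ^ 2 = d" using True by simp
    have "w^2 - T*w + D = 0" unfolding w_def using sq by (simp add: d_def power2_eq_square field_simps)
    hence "(complex_of_real w)^2 - of_real T * of_real w + of_real D = 0"
      by (metis of_real_0 of_real_add of_real_diff of_real_mult of_real_power)
    with H have "w < 0" by fastforce
    hence "T + sqrt d < 0" unfolding w_def by simp
    moreover have "sqrt d \<ge> 0" using True by simp
    ultimately have "T < 0" "sqrt d < - T" by linarith+
    hence "sqrt d ^ 2 < (-T)^2" using \<open>sqrt d \<ge> 0\<close> by (intro power_strict_mono) auto
    hence "d < T^2" using sq by simp
    thus ?thesis using \<open>T < 0\<close> unfolding d_def by simp
  next
    case False
    define z where "z = Complex (T/2) (sqrt (-d)/2)"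
    have sq: "sqrt (-d) ^ 2 = -d" using False by simp
    have "z^2 - of_real T * z + of_real D = 0"
      unfolding z_def using sq
      by (simp add: complex_eq_iff power2_eq_square d_def field_simps)
    with H have "T/2 < 0" unfolding z_def by fastforce
    moreover have "D > 0" using False unfolding d_def
      by (smt (verit) zero_le_power2)
    ultimately show ?thesis by simp
  qed
next
  assume A: "T < 0 \<and> D > 0"
  show "\<forall>z::complex. z^2 - of_real T * z + of_real D = 0 \<longrightarrow> Re z < 0"
  proof (intro allI impI)
    fix z :: complex
    assume E: "z^2 - of_real T * z + of_real D = 0"
    obtain a b where z: "z = Complex a b" by (cases z)
    have R: "a*a - b*b - T*a + D = 0" using arg_cong[OF E, of Re] by (simp add: z power2_eq_square)
    have I: "2*a*b - T*b = 0" using arg_cong[OF E, of Im] by (simp add: z power2_eq_square)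
    show "Re z < 0"
    proof (cases "b = 0")
      case True
      show ?thesis
      proof (rule ccontr)
        assume "\<not> Re z < 0"
        hence "a \<ge> 0" by (simp add: z)
        hence "a*a \<ge> 0" "T*a \<le> 0" using A by (auto intro: mult_nonpos_nonneg)
        moreover have "b*b = 0" using True by simp
        ultimately show False using R A by linarith
      qed
    next
      case False
      hence "2*a - T = 0" using I by (metis mult.commute right_diff_distrib mult_eq_0_iff mult.assoc)
      thus ?thesis using A by (simp add: z)
    qed
  qed
qed

lemma kernel2:
  fixes a b c d :: complex
  assumes "a*d - b*c = 0"
  shows "\<exists>s t. (s \<noteq> 0 \<or> t \<noteq> 0) \<and> a * s + b * t = 0 \<and> c * s + d * t = 0"
proof (cases "a \<noteq> 0 \<or> b \<noteq> 0")
  case True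
  show ?thesis by (rule exI[of _ b], rule exI[of _ "-a"]) (use True assms in \<open>auto simp: algebra_simps\<close>)
next
  case False
  show ?thesis
  proof (cases "c \<noteq> 0 \<or> d \<noteq> 0")
    case True
    show ?thesis by (rule exI[of _ d], rule exI[of _ "-c"]) (use True False in \<open>auto simp: algebra_simps\<close>)
  next
    case False2: False
    show ?thesis by (rule exI[of _ 1], rule exI[of _ 0]) (use False False2 in auto)
  qed
qed

lemma eig_iff:
  assumes A: "A \<in> carrier_mat n n"
  shows "eigenvalue A ev \<longleftrightarrow>
    (\<exists>w. (\<exists>k<n. w k \<noteq> 0) \<and> (\<forall>k<n. (\<Sum>j<n. A$$(k,j) * w j) = ev * w k))"
proof
  assume "eigenvalue A ev"
  then obtain v where v: "v \<in> carrier_vec n" "v \<noteq> 0\<^sub>v n" "A *\<^sub>v v = ev \<cdot>\<^sub>v v"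
    unfolding eigenvalue_def eigenvector_def using A by auto
  have "\<exists>k<n. v $ k \<noteq> 0"
  proof (rule ccontr)
    assume "\<not> ?thesis"
    hence "v = 0\<^sub>v n" using v(1) by (intro eq_vecI) auto
    thus False using v(2) by simp
  qed
  moreover have "\<forall>k<n. (\<Sum>j<n. A$$(k,j) * v $ j) = ev * v $ k"
  proof (intro allI impI)
    fix k assume k: "k < n"
    have "(A *\<^sub>v v) $ k = (ev \<cdot>\<^sub>v v) $ k" using v(3) by simp
    thus "(\<Sum>j<n. A$$(k,j) * v $ j) = ev * v $ k"
      using k A v(1) by (simp add: scalar_prod_def lessThan_atLeast0)
  qed
  ultimately show "\<exists>w. (\<exists>k<n. w k \<noteq> 0) \<and> (\<forall>k<n. (\<Sum>j<n. A$$(k,j) * w j) = ev * w k)"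
    by (intro exI[of _ "\<lambda>j. v $ j"]) auto
next
  assume "\<exists>w. (\<exists>k<n. w k \<noteq> 0) \<and> (\<forall>k<n. (\<Sum>j<n. A$$(k,j) * w j) = ev * w k)"
  then obtain w where w: "\<exists>k<n. w k \<noteq> 0" "\<forall>k<n. (\<Sum>j<n. A$$(k,j) * w j) = ev * w k" by blast
  define v where "v = vec n w"
  have "v \<in> carrier_vec n" unfolding v_def by simp
  moreover have "v \<noteq> 0\<^sub>v n" using w(1) unfolding v_def by (auto simp: vec_eq_iff)
  moreover have "A *\<^sub>v v = ev \<cdot>\<^sub>v v"
    using A w(2) by (intro eq_vecI) (auto simp: v_def scalar_prod_def lessThan_atLeast0)
  ultimately show "eigenvalue A ev" unfolding eigenvalue_def eigenvector_def using A by auto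
qed

lemma row_sum_gen:
  fixes w :: "nat \<Rightarrow> 'a::comm_ring_1"
  assumes C: "C \<subseteq> {..<n}" and k: "k < n"
  shows "(\<Sum>j<n. (if j = k then B else if j \<in> C then G else M) * w j)
     = (B - (if k \<in> C then G else M)) * w k + G * sum w C + M * sum w ({..<n} - C)"
proof -
  let ?f = "\<lambda>j. (if j = k then B else if j \<in> C then G else M) * w j"
  let ?g = "\<lambda>j. (if j \<in> C then G else M) * w j"
  have "(\<Sum>j<n. ?f j) = (\<Sum>j<n. ?g j + (if j = k then (B - (if k \<in> C then G else M)) * w k else 0))"
    by (rule sum.cong) (auto simp: algebra_simps)
  also have "\<dots> = (\<Sum>j<n. ?g j) + (B - (if k \<in> C then G else M)) * w k"
    using k by (simp add: sum.distrib)
  also have "(\<Sum>j<n. ?g j) = (\<Sum>j\<in>{..<n} - C. ?g j) + (\<Sum>j\<in>C. ?g j)"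
    using C by (simp add: sum.subset_diff)
  also have "(\<Sum>j\<in>{..<n} - C. ?g j) = M * sum w ({..<n} - C)"
    by (simp add: sum_distrib_left)
  also have "(\<Sum>j\<in>C. ?g j) = G * sum w C"
    by (simp add: sum_distrib_left)
  finally show ?thesis by (simp add: algebra_simps)
qed

lemma struct_stab:
  fixes b t g x m v :: real
  assumes C: "C \<subseteq> {..<n}" and cardC: "card C = i" and i1: "1 \<le> i" and iln: "i < n"
    and A: "A \<in> carrier_mat n n"
    and ent: "\<And>k j. k < n \<Longrightarrow> j < n \<Longrightarrow> A $$ (k,j) =
      (if j = k then (if k \<in> C then of_real b else of_real t)
       else if j \<in> C then (if k \<in> C then of_real g else of_real v)
       else (if k \<in> C then of_real m else of_real x))"
  shows "(\<forall>ev. eigenvalue A ev \<longrightarrow> Re ev < 0) \<longleftrightarrow>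
    ((1 < i \<longrightarrow> b - g < 0) \<and> (1 < n - i \<longrightarrow> t - x < 0) \<and>
     b + t + (real i - 1) * g + (real n - real i - 1) * x < 0 \<and>
     (b + (real i - 1) * g) * (t + (real n - real i - 1) * x) - real i * (real n - real i) * m * v > 0)"
proof -
  define D where "D = {..<n} - C"
  have finC: "finite C" using C finite_subset by blast
  have finD: "finite D" unfolding D_def by simp
  have cardD: "card D = n - i" unfolding D_def using C cardC by (simp add: card_Diff_subset finC)
  have rnj: "real (n - i) = real n - real i" using iln by simp
  define ci :: complex where "ci = of_nat i"
  define cj :: complex where "cj = of_nat (n - i)"
  have ci0: "ci \<noteq> 0" unfolding ci_def using i1 by simp
  have cj0: "cj \<noteq> 0" unfolding cj_def using iln by simp
  have rowC: "(\<Sum>j<n. A$$(k,j) * w j) = (of_real b - of_real g) * w k + of_real g * sum w C + of_real m * sum w D"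
    if k: "k \<in> C" for w k
  proof -
    have kn: "k < n" using k C by auto
    have "(\<Sum>j<n. A$$(k,j) * w j) = (\<Sum>j<n. (if j = k then (of_real b::complex) else if j \<in> C then of_real g else of_real m) * w j)"
      by (rule sum.cong) (use k kn ent in auto)
    then show ?thesis using row_sum_gen[OF C kn, where B="of_real b" and G="of_real g" and M="of_real m" and w=w] k
      unfolding D_def by simp
  qed
  have rowD: "(\<Sum>j<n. A$$(k,j) * w j) = (of_real t - of_real x) * w k + of_real v * sum w C + of_real x * sum w D"
    if k: "k \<in> D" for w k
  proof -
    have kn: "k < n" "k \<notin> C" using k unfolding D_def by auto
    have "(\<Sum>j<n. A$$(k,j) * w j) = (\<Sum>j<n. (if j = k then (of_real t::complex) else if j \<in> C then of_real v else of_real x) * w j)"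
      by (rule sum.cong) (use kn ent in auto)
    then show ?thesis using row_sum_gen[OF C kn(1), where B="of_real t" and G="of_real v" and M="of_real x" and w=w] kn
      unfolding D_def by simp
  qed
  have CD: "k < n \<longleftrightarrow> k \<in> C \<or> k \<in> D" for k unfolding D_def using C by auto
  define G3 where "G3 = b + t + (real i - 1) * g + (real n - real i - 1) * x"
  define G4 where "G4 = (b + (real i - 1) * g) * (t + (real n - real i - 1) * x) - real i * (real n - real i) * m * v"
  have detEq: "(of_real b + (ci - 1) * of_real g - z) * (of_real t + (cj - 1) * of_real x - z)
      - (ci * of_real m) * (cj * of_real v) = z^2 - of_real G3 * z + of_real G4" for z :: complex
    unfolding G3_def G4_def ci_def cj_def using iln
    by (simp add: of_nat_diff power2_eq_square algebra_simps)
  have eigC: "eigenvalue A ev \<longleftrightarrow> (\<exists>w. (\<exists>k<n. w k \<noteq> 0) \<and>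
      (\<forall>k\<in>C. (of_real b - of_real g) * w k + of_real g * sum w C + of_real m * sum w D = ev * w k) \<and>
      (\<forall>k\<in>D. (of_real t - of_real x) * w k + of_real v * sum w C + of_real x * sum w D = ev * w k))" for ev
  proof -
    have key: "(\<forall>k<n. (\<Sum>j<n. A$$(k,j) * w j) = ev * w k) \<longleftrightarrow>
      (\<forall>k\<in>C. (of_real b - of_real g) * w k + of_real g * sum w C + of_real m * sum w D = ev * w k) \<and>
      (\<forall>k\<in>D. (of_real t - of_real x) * w k + of_real v * sum w C + of_real x * sum w D = ev * w k)" for w
    proof
      assume H: "\<forall>k<n. (\<Sum>j<n. A$$(k,j) * w j) = ev * w k"
      show "(\<forall>k\<in>C. (of_real b - of_real g) * w k + of_real g * sum w C + of_real m * sum w D = ev * w k) \<and>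
        (\<forall>k\<in>D. (of_real t - of_real x) * w k + of_real v * sum w C + of_real x * sum w D = ev * w k)"
      proof (intro conjI ballI)
        fix k assume k: "k \<in> C"
        hence "k < n" using C by auto
        with H rowC[OF k, of w] show "(of_real b - of_real g) * w k + of_real g * sum w C + of_real m * sum w D = ev * w k"
          by simp
      next
        fix k assume k: "k \<in> D"
        hence "k < n" using CD by auto
        with H rowD[OF k, of w] show "(of_real t - of_real x) * w k + of_real v * sum w C + of_real x * sum w D = ev * w k"
          by simp
      qed
    next
      assume H: "(\<forall>k\<in>C. (of_real b - of_real g) * w k + of_real g * sum w C + of_real m * sum w D = ev * w k) \<and>
        (\<forall>k\<in>D. (of_real t - of_real x) * w k + of_real v * sum w C + of_real x * sum w D = ev * w k)"
      show "\<forall>k<n. (\<Sum>j<n. A$$(k,j) * w j) = ev * w k"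
      proof (intro allI impI)
        fix k assume "k < n"
        hence "k \<in> C \<or> k \<in> D" using CD by auto
        thus "(\<Sum>j<n. A$$(k,j) * w j) = ev * w k"
        proof
          assume k: "k \<in> C" thus ?thesis using H rowC[OF k, of w] by simp
        next
          assume k: "k \<in> D" thus ?thesis using H rowD[OF k, of w] by simp
        qed
      qed
    qed
    show ?thesis by (simp only: eig_iff[OF A] key)
  qed
  show ?thesis
  proof
    assume S: "\<forall>ev. eigenvalue A ev \<longrightarrow> Re ev < 0"
    have G2: "b - g < 0" if "1 < i"
    proof -
      have "C \<noteq> {}" using cardC i1 by auto
      then obtain a1 where a1: "a1 \<in> C" by blast
      have "card (C - {a1}) = i - 1" using a1 cardC finC by simp
      hence "card (C - {a1}) > 0" using that by simp
      hence "C - {a1} \<noteq> {}" by (metis card.empty less_irrefl)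
      then obtain a2 where a2: "a2 \<in> C - {a1}" by blast
      define w :: "nat \<Rightarrow> complex" where "w j = (if j = a1 then 1 else 0) - (if j = a2 then 1 else 0)" for j
      have sC: "sum w C = 0" unfolding w_def using a1 a2 finC by (simp add: sum_subtractf)
      have sD: "sum w D = 0" unfolding w_def using a1 a2 finD by (simp add: sum_subtractf D_def)
      have wD: "w k = 0" if "k \<in> D" for k using that a1 a2 unfolding w_def D_def by auto
      have "eigenvalue A (of_real b - of_real g)"
        unfolding eigC
      proof (intro exI[of _ w] conjI ballI)
        show "\<exists>k<n. w k \<noteq> 0" using a1 C a2 by (intro exI[of _ a1]) (auto simp: w_def)
      qed (auto simp: sC sD wD)
      with S show ?thesis by fastforce
    qed
    have G1: "t - x < 0" if "1 < n - i"
    proof -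
      have "D \<noteq> {}" using cardD that by auto
      then obtain a1 where a1: "a1 \<in> D" by blast
      have "card (D - {a1}) = n - i - 1" using a1 cardD finD by simp
      hence "card (D - {a1}) > 0" using that by simp
      hence "D - {a1} \<noteq> {}" by (metis card.empty less_irrefl)
      then obtain a2 where a2: "a2 \<in> D - {a1}" by blast
      define w :: "nat \<Rightarrow> complex" where "w j = (if j = a1 then 1 else 0) - (if j = a2 then 1 else 0)" for j
      have sD: "sum w D = 0" unfolding w_def using a1 a2 finD by (simp add: sum_subtractf)
      have sC: "sum w C = 0" unfolding w_def using a1 a2 finC by (simp add: sum_subtractf D_def)
      have wC: "w k = 0" if "k \<in> C" for k using that a1 a2 unfolding w_def D_def by auto
      have "eigenvalue A (of_real t - of_real x)"
        unfolding eigC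
      proof (intro exI[of _ w] conjI ballI)
        show "\<exists>k<n. w k \<noteq> 0" using a1 a2 unfolding D_def by (intro exI[of _ a1]) (auto simp: w_def)
      qed (auto simp: sC sD wC)
      with S show ?thesis by fastforce
    qed
    have "\<forall>z::complex. z^2 - of_real G3 * z + of_real G4 = 0 \<longrightarrow> Re z < 0"
    proof (intro allI impI)
      fix z :: complex
      assume "z^2 - of_real G3 * z + of_real G4 = 0"
      hence "(of_real b + (ci - 1) * of_real g - z) * (of_real t + (cj - 1) * of_real x - z)
         - (ci * of_real m) * (cj * of_real v) = 0" using detEq by simp
      from kernel2[OF this] obtain s u where su: "s \<noteq> 0 \<or> u \<noteq> 0"
        "(of_real b + (ci - 1) * of_real g - z) * s + (ci * of_real m) * u = 0"
        "(cj * of_real v) * s + (of_real t + (cj - 1) * of_real x - z) * u = 0" by blast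
      define w where "w j = (if j \<in> C then s / ci else u / cj)" for j
      have sC: "sum w C = s" unfolding w_def using cardC ci0 by (simp add: ci_def)
      have sD: "sum w D = u" unfolding w_def D_def using cardD cj0 by (simp add: cj_def D_def)
      have "eigenvalue A z"
        unfolding eigC
      proof (intro exI[of _ w] conjI ballI)
        show "\<exists>k<n. w k \<noteq> 0"
        proof (cases "s \<noteq> 0")
          case True
          have "C \<noteq> {}" using cardC i1 by auto
          then obtain k where "k \<in> C" by blast
          thus ?thesis using True ci0 C by (intro exI[of _ k]) (auto simp: w_def)
        next
          case False
          hence u: "u \<noteq> 0" using su by simp
          have "D \<noteq> {}" using cardD iln by auto
          then obtain k where k: "k \<in> D" by blast
          thus ?thesis using u cj0 unfolding D_def by (intro exI[of _ k]) (auto simp: w_def)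
        qed
      next
        fix k assume k: "k \<in> C"
        have "(of_real b - of_real g) * w k + of_real g * sum w C + of_real m * sum w D - z * w k
           = ((of_real b + (ci - 1) * of_real g - z) * s + (ci * of_real m) * u) / ci"
          using k ci0 by (simp add: sC sD w_def[of k] field_simps)
        thus "(of_real b - of_real g) * w k + of_real g * sum w C + of_real m * sum w D = z * w k"
          using su(2) by simp
      next
        fix k assume k: "k \<in> D"
        have "(of_real t - of_real x) * w k + of_real v * sum w C + of_real x * sum w D - z * w k
           = ((cj * of_real v) * s + (of_real t + (cj - 1) * of_real x - z) * u) / cj"
          using k cj0 unfolding D_def by (simp add: sC[unfolded D_def] sD[unfolded D_def] w_def[of k] field_simps)
        thus "(of_real t - of_real x) * w k + of_real v * sum w C + of_real x * sum w D = z * w k"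
          using su(3) by simp
      qed
      with S show "Re z < 0" by blast
    qed
    hence "G3 < 0 \<and> G4 > 0" using quad_roots by blast
    thus "(1 < i \<longrightarrow> b - g < 0) \<and> (1 < n - i \<longrightarrow> t - x < 0) \<and>
     b + t + (real i - 1) * g + (real n - real i - 1) * x < 0 \<and>
     (b + (real i - 1) * g) * (t + (real n - real i - 1) * x) - real i * (real n - real i) * m * v > 0"
      using G1 G2 unfolding G3_def G4_def by blast
  next
    assume H: "(1 < i \<longrightarrow> b - g < 0) \<and> (1 < n - i \<longrightarrow> t - x < 0) \<and>
     b + t + (real i - 1) * g + (real n - real i - 1) * x < 0 \<and>
     (b + (real i - 1) * g) * (t + (real n - real i - 1) * x) - real i * (real n - real i) * m * v > 0"
    hence Q: "\<forall>z::complex. z^2 - of_real G3 * z + of_real G4 = 0 \<longrightarrow> Re z < 0"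
      using quad_roots unfolding G3_def G4_def by blast
    show "\<forall>ev. eigenvalue A ev \<longrightarrow> Re ev < 0"
    proof (intro allI impI)
      fix ev assume "eigenvalue A ev"
      then obtain w where w: "\<exists>k<n. w k \<noteq> 0"
        "\<forall>k\<in>C. (of_real b - of_real g) * w k + of_real g * sum w C + of_real m * sum w D = ev * w k"
        "\<forall>k\<in>D. (of_real t - of_real x) * w k + of_real v * sum w C + of_real x * sum w D = ev * w k"
        unfolding eigC by blast
      define Sp where "Sp = sum w C"
      define Sq where "Sq = sum w D"
      have "(\<Sum>k\<in>C. ev * w k) = (\<Sum>k\<in>C. (of_real b - of_real g) * w k + (of_real g * Sp + of_real m * Sq))"
        by (rule sum.cong) (auto simp: Sp_def Sq_def w(2)[rule_format, symmetric] add.assoc)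
      hence E1': "ev * Sp = (of_real b - of_real g) * Sp + ci * (of_real g * Sp + of_real m * Sq)"
        by (simp add: sum.distrib sum_distrib_left[symmetric] cardC ci_def Sp_def)
      have "(\<Sum>k\<in>D. ev * w k) = (\<Sum>k\<in>D. (of_real t - of_real x) * w k + (of_real v * Sp + of_real x * Sq))"
        by (rule sum.cong) (auto simp: Sp_def Sq_def w(3)[rule_format, symmetric] add.assoc)
      hence E2': "ev * Sq = (of_real t - of_real x) * Sq + cj * (of_real v * Sp + of_real x * Sq)"
        by (simp add: sum.distrib sum_distrib_left[symmetric] cardD cj_def Sq_def)
      define a where "a = of_real b + (ci - 1) * of_real g - ev"
      define d where "d = of_real t + (cj - 1) * of_real x - ev"
      have E1: "a * Sp + (ci * of_real m) * Sq = 0" using E1' unfolding a_def by (simp add: algebra_simps)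
      have E2: "(cj * of_real v) * Sp + d * Sq = 0" using E2' unfolding d_def by (simp add: algebra_simps)
      define det where "det = a * d - (ci * of_real m) * (cj * of_real v)"
      have dSp: "det * Sp = d * (a * Sp + (ci * of_real m) * Sq) - (ci * of_real m) * ((cj * of_real v) * Sp + d * Sq)"
        unfolding det_def by (simp add: algebra_simps)
      have dSq: "det * Sq = a * ((cj * of_real v) * Sp + d * Sq) - (cj * of_real v) * (a * Sp + (ci * of_real m) * Sq)"
        unfolding det_def by (simp add: algebra_simps)
      show "Re ev < 0"
      proof (cases "Sp \<noteq> 0 \<or> Sq \<noteq> 0")
        case True
        hence "det = 0" using dSp dSq E1 E2 by auto
        hence "ev^2 - of_real G3 * ev + of_real G4 = 0" using detEq[of ev] unfolding det_def a_def d_def by simp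
        with Q show ?thesis by blast
      next
        case False
        hence S0: "sum w C = 0" "sum w D = 0" unfolding Sp_def Sq_def by auto
        from w(1) obtain k where k: "k < n" "w k \<noteq> 0" by blast
        show ?thesis
        proof (cases "k \<in> C")
          case True
          hence "(of_real b - of_real g) * w k = ev * w k" using w(2) S0 by auto
          hence ev: "ev = of_real b - of_real g" using k(2) by simp
          have "i \<noteq> 1"
          proof
            assume "i = 1"
            then obtain a0 where "C = {a0}" using cardC card_1_singletonE by metis
            thus False using True S0 k(2) by simp
          qed
          thus ?thesis using H i1 ev by simp
        next
          case False
          hence kD: "k \<in> D" using k CD by blast
          hence "(of_real t - of_real x) * w k = ev * w k" using w(3) S0 by auto
          hence ev: "ev = of_real t - of_real x" using k(2) by simp
          have "n - i \<noteq> 1"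
          proof
            assume "n - i = 1"
            then obtain a0 where "D = {a0}" using cardD card_1_singletonE by metis
            thus False using kD S0 k(2) by simp
          qed
          moreover have "n - i \<noteq> 0" using iln by simp
          ultimately show ?thesis using H ev by simp
        qed
      qed
    qed
  qed
qed



lemma P_local:
  assumes M: "MSRS n l g h P" and "\<forall>k<n. x k = y k"
  shows "P x = P y"
  using assms unfolding MSRS_def by blast

lemma P_perm:
  assumes M: "MSRS n l g h P" and p: "\<pi> permutes {..<n}"
  shows "P (x \<circ> \<pi>) = P x"
  using p finite_lessThan[of n]
proof (induction \<pi> arbitrary: x rule: permutes_induct)
  case id show ?case by simp
next
  case (swap a b p)
  have "P (x \<circ> (Transposition.transpose a b \<circ> p)) = P ((x \<circ> Transposition.transpose a b) \<circ> p)"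
    by (simp add: comp_assoc)
  also have "\<dots> = P (x \<circ> Transposition.transpose a b)" by (rule swap.IH)
  also have "\<dots> = P x" using M swap.hyps unfolding MSRS_def by auto
  finally show ?case .
qed

lemma P_swap_upd:
  assumes M: "MSRS n l g h P" and a: "a < n" and b: "b < n" and e: "y a = y b"
  shows "P (y(a := t)) = P (y(b := t))"
proof (cases "a = b")
  case False
  have "y(a := t) = y(b := t) \<circ> Transposition.transpose a b"
    using False e by (auto simp: fun_eq_iff Transposition.transpose_def)
  thus ?thesis using M a b unfolding MSRS_def by metis
qed simp

lemma P_deriv:
  assumes M: "MSRS n l g h P" and x: "pos_pt n x" and j: "j < n"
  shows "((\<lambda>t. P (x(j:=t))) has_real_derivative partial P j x) (at (x j))"
proof -
  from M x obtain c where c: "\<forall>e>0. \<exists>d>0. \<forall>y. (\<forall>k<n. \<bar>y k - x k\<bar> < d) \<and> (\<forall>k. n \<le> k \<longrightarrow> y k = x k) \<longrightarrow>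
      \<bar>P y - P x - (\<Sum>k<n. c k * (y k - x k))\<bar> \<le> e * (\<Sum>k<n. \<bar>y k - x k\<bar>)"
    unfolding MSRS_def differentiable_n_def by blast
  have D: "((\<lambda>t. P (x(j:=t))) has_real_derivative c j) (at (x j))"
    unfolding has_field_derivative_iff
  proof (rule LIM_I)
    fix e :: real assume e: "e > 0"
    then obtain d where d: "d > 0" and dd: "\<forall>y. (\<forall>k<n. \<bar>y k - x k\<bar> < d) \<and> (\<forall>k. n \<le> k \<longrightarrow> y k = x k) \<longrightarrow>
      \<bar>P y - P x - (\<Sum>k<n. c k * (y k - x k))\<bar> \<le> e/2 * (\<Sum>k<n. \<bar>y k - x k\<bar>)"
      using c[rule_format, of "e/2"] by auto
    show "\<exists>s>0. \<forall>t. t \<noteq> x j \<and> norm (t - x j) < s \<longrightarrow>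
        norm ((P (x(j:=t)) - P (x(j:=x j))) / (t - x j) - c j) < e"
    proof (intro exI[of _ d] conjI allI impI)
      show "d > 0" by (rule d)
      fix t assume t: "t \<noteq> x j \<and> norm (t - x j) < d"
      let ?y = "x(j:=t)"
      have "(\<Sum>k<n. c k * (?y k - x k)) = (\<Sum>k<n. if k = j then c j * (t - x j) else 0)"
        by (rule sum.cong) auto
      hence s1: "(\<Sum>k<n. c k * (?y k - x k)) = c j * (t - x j)" using j by simp
      have "(\<Sum>k<n. \<bar>?y k - x k\<bar>) = (\<Sum>k<n. if k = j then \<bar>t - x j\<bar> else 0)"
        by (rule sum.cong) auto
      hence s2: "(\<Sum>k<n. \<bar>?y k - x k\<bar>) = \<bar>t - x j\<bar>" using j by simp
      have pre: "(\<forall>k<n. \<bar>?y k - x k\<bar> < d) \<and> (\<forall>k. n \<le> k \<longrightarrow> ?y k = x k)"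
        using t d j by auto
      have bnd: "\<bar>P ?y - P x - c j * (t - x j)\<bar> \<le> e/2 * \<bar>t - x j\<bar>"
        using dd[rule_format, OF pre] unfolding s1 s2 .
      have tne: "t - x j \<noteq> 0" using t by simp
      have "(P ?y - P x) / (t - x j) - c j = (P ?y - P x - c j * (t - x j)) / (t - x j)"
        using tne by (simp add: field_simps)
      hence "norm ((P ?y - P (x(j:=x j))) / (t - x j) - c j) = \<bar>P ?y - P x - c j * (t - x j)\<bar> / \<bar>t - x j\<bar>"
        by (simp add: abs_divide)
      also have "\<dots> \<le> e/2"
        using bnd tne by (simp add: pos_divide_le_eq)
      also have "\<dots> < e" using e by simp
      finally show "norm ((P (x(j:=t)) - P (x(j:=x j))) / (t - x j) - c j) < e" .
    qed
  qed
  have "partial P j x = c j" unfolding partial_def using DERIV_imp_deriv[OF D] by simp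
  with D show ?thesis by simp
qed

lemma aux_frac:
  fixes Q L p :: real
  shows "Q \<noteq> 0 \<Longrightarrow> L \<noteq> 0 \<Longrightarrow> - (L * Q * p) / Q^2 = p / (- Q / L)"
  by (simp add: field_simps power2_eq_square)

lemma partial_off:
  assumes M: "MSRS n l g h P" and x: "pos_pt n x" and k: "k < n" and j: "j < n" and kj: "k \<noteq> j"
    and eq: "msrs_f l g h P \<sigma> k x = 0"
  shows "partial (msrs_f l g h P \<sigma> k) j x = partial P j x / Dk l h P k x"
proof -
  define e where "e = h (x k)"
  define pj where "pj = partial P j x"
  have fe: "(\<lambda>t. msrs_f l g h P \<sigma> k (x(j:=t))) = (\<lambda>t. - l (x k) + \<sigma> * g (x k) / (P (x(j:=t)) + e))"
    using kj by (auto simp: msrs_f_def e_def fun_eq_iff)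
  have pos: "P x + e > 0" using M x k unfolding MSRS_def e_def by blast
  have xk: "x k > 0" using x k unfolding pos_pt_def by blast
  have l0: "l (x k) \<noteq> 0" using M xk unfolding MSRS_def by blast
  have d1: "((\<lambda>t. P (x(j:=t)) + e) has_real_derivative pj + 0) (at (x j))"
    unfolding pj_def by (intro DERIV_add P_deriv[OF M x j] DERIV_const)
  have nz: "P (x(j:=x j)) + e \<noteq> 0" using pos by simp
  note d3 = DERIV_add[OF DERIV_const[of "- l (x k)"] DERIV_quotient[OF DERIV_const[of "\<sigma> * g (x k)"] d1 nz]]
  have pd: "partial (msrs_f l g h P \<sigma> k) j x = - (\<sigma> * g (x k) * pj) / ((P x + e)^2)"
    unfolding partial_def fe using DERIV_imp_deriv[OF d3] by (simp add: power2_eq_square fun_upd_def ac_simps)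
  have sg: "\<sigma> * g (x k) = l (x k) * (P x + e)"
    using eq pos unfolding msrs_f_def e_def by (simp add: field_simps)
  show ?thesis unfolding pd Dk_def sg pj_def[symmetric] e_def[symmetric]
    using aux_frac[of "P x + e" "l (x k)" pj] pos l0 by simp
qed

lemma partial_diag_eq:
  assumes M: "MSRS n l g h P" and a: "a < n" and b: "b < n" and e: "y a = y b"
  shows "partial (msrs_f l g h P \<sigma> a) a y = partial (msrs_f l g h P \<sigma> b) b y"
proof -
  have "(\<lambda>t. msrs_f l g h P \<sigma> a (y(a:=t))) = (\<lambda>t. msrs_f l g h P \<sigma> b (y(b:=t)))"
    using P_swap_upd[OF M a b e] by (auto simp: msrs_f_def fun_eq_iff)
  thus ?thesis unfolding partial_def using e by simp
qed

lemma partialP_eq: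
  assumes M: "MSRS n l g h P" and a: "a < n" and b: "b < n" and e: "y a = y b"
  shows "partial P a y = partial P b y"
proof -
  have "(\<lambda>t. P (y(a:=t))) = (\<lambda>t. P (y(b:=t)))"
    using P_swap_upd[OF M a b e] by (auto simp: fun_eq_iff)
  thus ?thesis unfolding partial_def using e by simp
qed

lemma Dk_eq: "y a = y b \<Longrightarrow> Dk l h P a y = Dk l h P b y"
  unfolding Dk_def by simp

lemma transfer_P:
  assumes M: "MSRS n l g h P" and p: "\<pi> permutes {..<n}" and r: "\<forall>k<n. r k = \<rho> (\<pi> k)"
    and j: "j < n"
  shows "P (r(j:=t)) = P (\<rho>(\<pi> j:=t))"
proof -
  have inj: "\<pi> k = \<pi> j \<longleftrightarrow> k = j" for k using p by (metis permutes_inj injD)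
  have "P (r(j:=t)) = P (\<rho>(\<pi> j:=t) \<circ> \<pi>)"
    by (rule P_local[OF M]) (use r inj in auto)
  also have "\<dots> = P (\<rho>(\<pi> j:=t))" by (rule P_perm[OF M p])
  finally show ?thesis .
qed

lemma transfer_Pr:
  assumes M: "MSRS n l g h P" and p: "\<pi> permutes {..<n}" and r: "\<forall>k<n. r k = \<rho> (\<pi> k)"
  shows "P r = P \<rho>"
proof -
  have "P r = P (\<rho> \<circ> \<pi>)" by (rule P_local[OF M]) (use r in auto)
  also have "\<dots> = P \<rho>" by (rule P_perm[OF M p])
  finally show ?thesis .
qed

lemma transfer_partial:
  assumes M: "MSRS n l g h P" and p: "\<pi> permutes {..<n}" and r: "\<forall>k<n. r k = \<rho> (\<pi> k)"
    and k: "k < n" and j: "j < n"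
  shows "partial (msrs_f l g h P \<sigma> k) j r = partial (msrs_f l g h P \<sigma> (\<pi> k)) (\<pi> j) \<rho>"
proof -
  have inj: "\<pi> k = \<pi> j \<longleftrightarrow> k = j" using p by (metis permutes_inj injD)
  have "(\<lambda>t. msrs_f l g h P \<sigma> k (r(j:=t))) = (\<lambda>t. msrs_f l g h P \<sigma> (\<pi> k) (\<rho>(\<pi> j:=t)))"
    using transfer_P[OF M p r j] r k inj by (auto simp: msrs_f_def fun_eq_iff)
  thus ?thesis unfolding partial_def using r j by simp
qed



lemma sum_prod_neg:
  fixes u w :: real
  shows "(u + w < 0 \<and> u * w > 0) \<longleftrightarrow> (u < 0 \<and> w < 0)"
  by (smt (verit) mult_neg_neg mult_nonneg_nonneg mult_nonpos_nonneg mult_nonneg_nonpos)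

theorem corollary1:
  fixes l g h :: "real \<Rightarrow> real" and P :: "(nat \<Rightarrow> real) \<Rightarrow> real"
    and n :: nat and \<sigma> :: real and r :: "nat \<Rightarrow> real"
  assumes "n \<ge> 2" and "MSRS n l g h P" and "\<sigma> > 0"
    and "equilibrium n l g h P \<sigma> r"
  shows
   "(\<forall>q. (\<forall>k<n. r k = q) \<longrightarrow>
      (let \<tau> = partial (msrs_f l g h P \<sigma> (n - 1)) (n - 1) r;
           \<xi> = partial P (n - 2) r / Dk l h P (n - 1) r;
           G1 = \<tau> - \<xi>; G2 = \<tau> + (real n - 1) * \<xi>
       in stable_eq n l g h P \<sigma> r \<longleftrightarrow> G1 < 0 \<and> G2 < 0))
    \<and>
    (\<forall>p q i. p \<noteq> q \<and> 1 \<le> i \<and> i \<le> n div 2 \<and>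
        card {k. k < n \<and> r k = p} = i \<and> card {k. k < n \<and> r k = q} = n - i \<longrightarrow>
      (let \<rho> = (\<lambda>k. if k < i then p else q);
           \<beta> = partial (msrs_f l g h P \<sigma> 0) 0 \<rho>;
           \<tau> = partial (msrs_f l g h P \<sigma> (n - 1)) (n - 1) \<rho>;
           \<gamma> = partial P 1 \<rho> / Dk l h P 0 \<rho>;
           \<xi> = partial P (n - 2) \<rho> / Dk l h P (n - 1) \<rho>;
           \<mu> = partial P (n - 1) \<rho> / Dk l h P 0 \<rho>;
           \<nu> = partial P 0 \<rho> / Dk l h P (n - 1) \<rho>;
           G1 = \<tau> - \<xi>;
           G2 = \<beta> - \<gamma>;
           G3 = \<beta> + \<tau> + (real i - 1) * \<gamma> + (real n - real i - 1) * \<xi>;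
           G4 = (\<beta> + (real i - 1) * \<gamma>) * (\<tau> + (real n - real i - 1) * \<xi>)
                - real i * (real n - real i) * \<mu> * \<nu>
       in (i = 1 \<and> n = 2 \<longrightarrow> (stable_eq n l g h P \<sigma> r \<longleftrightarrow> G3 < 0 \<and> G4 > 0)) \<and>
          (i = 1 \<and> n > 2 \<longrightarrow> (stable_eq n l g h P \<sigma> r \<longleftrightarrow> G1 < 0 \<and> G3 < 0 \<and> G4 > 0)) \<and>
          (2 \<le> i \<longrightarrow> (stable_eq n l g h P \<sigma> r \<longleftrightarrow> G1 < 0 \<and> G2 < 0 \<and> G3 < 0 \<and> G4 > 0))))"
proof -
  note n2 = assms(1) and M = assms(2)
  have rpos: "pos_pt n r" and req: "\<And>k. k < n \<Longrightarrow> msrs_f l g h P \<sigma> k r = 0"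
    using assms(4) unfolding equilibrium_def by auto
  define J where "J = map_mat complex_of_real (jacobian n (msrs_f l g h P \<sigma>) r)"
  have Jc: "J \<in> carrier_mat n n" unfolding J_def jacobian_def by simp
  have Jent: "\<And>k j. k < n \<Longrightarrow> j < n \<Longrightarrow> J $$ (k,j) = of_real (partial (msrs_f l g h P \<sigma> k) j r)"
    unfolding J_def jacobian_def by simp
  have stab: "stable_eq n l g h P \<sigma> r \<longleftrightarrow> (\<forall>ev. eigenvalue J ev \<longrightarrow> Re ev < 0)"
    unfolding stable_eq_def J_def ..
  have part1: "\<forall>q. (\<forall>k<n. r k = q) \<longrightarrow>
      (let \<tau> = partial (msrs_f l g h P \<sigma> (n - 1)) (n - 1) r;
           \<xi> = partial P (n - 2) r / Dk l h P (n - 1) r;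
           G1 = \<tau> - \<xi>; G2 = \<tau> + (real n - 1) * \<xi>
       in stable_eq n l g h P \<sigma> r \<longleftrightarrow> G1 < 0 \<and> G2 < 0)"
  proof (intro allI impI)
    fix q assume rq: "\<forall>k<n. r k = q"
    define \<tau> where "\<tau> = partial (msrs_f l g h P \<sigma> (n - 1)) (n - 1) r"
    define \<xi> where "\<xi> = partial P (n - 2) r / Dk l h P (n - 1) r"
    have ent: "J $$ (k,j) = (if j = k then (if k \<in> {0} then of_real \<tau> else of_real \<tau>)
       else if j \<in> {0} then (if k \<in> {0} then of_real 0 else of_real \<xi>)
       else (if k \<in> {0} then of_real \<xi> else of_real \<xi>))" if k: "k < n" and j: "j < n" for k j
    proof (cases "j = k")
      case True
      have "partial (msrs_f l g h P \<sigma> k) k r = \<tau>"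
        unfolding \<tau>_def by (rule partial_diag_eq[OF M]) (use k n2 rq in auto)
      thus ?thesis using True Jent k by simp
    next
      case False
      have "partial (msrs_f l g h P \<sigma> k) j r = partial P j r / Dk l h P k r"
        by (rule partial_off[OF M rpos k j]) (use False req k in auto)
      also have "\<dots> = \<xi>" unfolding \<xi>_def
        using partialP_eq[OF M j, of "n-2" r] Dk_eq[of r k "n-1" l h P] k j n2 rq by simp
      finally show ?thesis using False Jent k j by auto
    qed
    have res: "(\<forall>ev. eigenvalue J ev \<longrightarrow> Re ev < 0) \<longleftrightarrow>
      ((1 < (1::nat) \<longrightarrow> \<tau> - 0 < 0) \<and> (1 < n - 1 \<longrightarrow> \<tau> - \<xi> < 0) \<and>
       \<tau> + \<tau> + (real 1 - 1) * 0 + (real n - real 1 - 1) * \<xi> < 0 \<and>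
       (\<tau> + (real 1 - 1) * 0) * (\<tau> + (real n - real 1 - 1) * \<xi>) - real 1 * (real n - real 1) * \<xi> * \<xi> > 0)"
      by (rule struct_stab[where C="{0}" and A=J and b=\<tau> and t=\<tau> and g=0 and x=\<xi> and m=\<xi> and v=\<xi>])
         (use n2 Jc ent in auto)
    have e1: "\<tau> + \<tau> + (real 1 - 1) * 0 + (real n - real 1 - 1) * \<xi> = (\<tau> - \<xi>) + (\<tau> + (real n - 1) * \<xi>)"
      by (simp add: algebra_simps)
    have e2: "(\<tau> + (real 1 - 1) * 0) * (\<tau> + (real n - real 1 - 1) * \<xi>) - real 1 * (real n - real 1) * \<xi> * \<xi>
       = (\<tau> - \<xi>) * (\<tau> + (real n - 1) * \<xi>)"
      by (simp add: algebra_simps)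
    have "stable_eq n l g h P \<sigma> r \<longleftrightarrow> \<tau> - \<xi> < 0 \<and> \<tau> + (real n - 1) * \<xi> < 0"
      unfolding stab res e1 e2 sum_prod_neg by auto
    thus "let \<tau> = partial (msrs_f l g h P \<sigma> (n - 1)) (n - 1) r;
           \<xi> = partial P (n - 2) r / Dk l h P (n - 1) r;
           G1 = \<tau> - \<xi>; G2 = \<tau> + (real n - 1) * \<xi>
       in stable_eq n l g h P \<sigma> r \<longleftrightarrow> G1 < 0 \<and> G2 < 0"
      unfolding Let_def \<tau>_def \<xi>_def .
  qed
  have part2: "\<forall>p q i. p \<noteq> q \<and> 1 \<le> i \<and> i \<le> n div 2 \<and>
        card {k. k < n \<and> r k = p} = i \<and> card {k. k < n \<and> r k = q} = n - i \<longrightarrow>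
      (let \<rho> = (\<lambda>k. if k < i then p else q);
           \<beta> = partial (msrs_f l g h P \<sigma> 0) 0 \<rho>;
           \<tau> = partial (msrs_f l g h P \<sigma> (n - 1)) (n - 1) \<rho>;
           \<gamma> = partial P 1 \<rho> / Dk l h P 0 \<rho>;
           \<xi> = partial P (n - 2) \<rho> / Dk l h P (n - 1) \<rho>;
           \<mu> = partial P (n - 1) \<rho> / Dk l h P 0 \<rho>;
           \<nu> = partial P 0 \<rho> / Dk l h P (n - 1) \<rho>;
           G1 = \<tau> - \<xi>;
           G2 = \<beta> - \<gamma>;
           G3 = \<beta> + \<tau> + (real i - 1) * \<gamma> + (real n - real i - 1) * \<xi>;
           G4 = (\<beta> + (real i - 1) * \<gamma>) * (\<tau> + (real n - real i - 1) * \<xi>)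
                - real i * (real n - real i) * \<mu> * \<nu>
       in (i = 1 \<and> n = 2 \<longrightarrow> (stable_eq n l g h P \<sigma> r \<longleftrightarrow> G3 < 0 \<and> G4 > 0)) \<and>
          (i = 1 \<and> n > 2 \<longrightarrow> (stable_eq n l g h P \<sigma> r \<longleftrightarrow> G1 < 0 \<and> G3 < 0 \<and> G4 > 0)) \<and>
          (2 \<le> i \<longrightarrow> (stable_eq n l g h P \<sigma> r \<longleftrightarrow> G1 < 0 \<and> G2 < 0 \<and> G3 < 0 \<and> G4 > 0)))"
  proof (intro allI impI)
    fix p q i
    assume H: "p \<noteq> q \<and> 1 \<le> i \<and> i \<le> n div 2 \<and>
        card {k. k < n \<and> r k = p} = i \<and> card {k. k < n \<and> r k = q} = n - i"
    define Cr where "Cr = {k. k < n \<and> r k = p}"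
    define Dr where "Dr = {k. k < n \<and> r k = q}"
    have pq: "p \<noteq> q" and i1: "1 \<le> i" and ih: "i \<le> n div 2" and cC: "card Cr = i" and cD: "card Dr = n - i"
      using H unfolding Cr_def Dr_def by auto
    have iln: "i < n" using ih n2 by linarith
    have nm1: "\<not> n - 1 < i" "n - 1 < n" "\<not> n - Suc 0 < i" "n - Suc 0 < n" using iln by auto
    have CrS: "Cr \<subseteq> {..<n}" and DrS: "Dr \<subseteq> {..<n}" unfolding Cr_def Dr_def by auto
    have finC: "finite Cr" and finD: "finite Dr" using CrS DrS finite_subset by blast+
    have disj: "Cr \<inter> Dr = {}" unfolding Cr_def Dr_def using pq by auto
    have "card (Cr \<union> Dr) = n" using card_Un_disjoint[OF finC finD disj] cC cD iln by simp
    hence CDn: "Cr \<union> Dr = {..<n}" using CrS DrS by (intro card_subset_eq) auto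
    obtain f1 where f1: "bij_betw f1 Cr {..<i}" using finite_same_card_bij[OF finC, of "{..<i}"] cC by auto
    obtain f2 where f2: "bij_betw f2 Dr {i..<n}" using finite_same_card_bij[OF finD, of "{i..<n}"] cD by auto
    define \<pi> where "\<pi> k = (if k \<in> Cr then f1 k else if k \<in> Dr then f2 k else k)" for k
    have b1: "bij_betw \<pi> Cr {..<i}" using f1 by (rule bij_betw_cong[THEN iffD1, rotated]) (auto simp: \<pi>_def)
    have b2: "bij_betw \<pi> Dr {i..<n}" using f2 by (rule bij_betw_cong[THEN iffD1, rotated]) (use disj in \<open>auto simp: \<pi>_def\<close>)
    have "bij_betw \<pi> (Cr \<union> Dr) ({..<i} \<union> {i..<n})" by (rule bij_betw_combine[OF b1 b2]) auto
    moreover have "{..<i} \<union> {i..<n} = {..<n}" using iln by auto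
    ultimately have bij: "bij_betw \<pi> {..<n} {..<n}" using CDn by simp
    have perm: "\<pi> permutes {..<n}"
      by (rule bij_imp_permutes[OF bij]) (use CrS DrS in \<open>auto simp: \<pi>_def\<close>)
    define \<rho> where "\<rho> = (\<lambda>k::nat. if k < i then p else q)"
    have rr: "\<forall>k<n. r k = \<rho> (\<pi> k)"
    proof (intro allI impI)
      fix k assume k: "k < n"
      hence "k \<in> Cr \<or> k \<in> Dr" using CDn by auto
      thus "r k = \<rho> (\<pi> k)"
      proof
        assume kC: "k \<in> Cr"
        hence "\<pi> k < i" using b1 by (auto simp: bij_betw_def)
        thus ?thesis using kC unfolding \<rho>_def Cr_def by simp
      next
        assume kD: "k \<in> Dr"
        hence "\<pi> k \<in> {i..<n}" using b2 by (auto simp: bij_betw_def)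
        thus ?thesis using kD unfolding \<rho>_def Dr_def by simp
      qed
    qed
    have piC: "k \<in> Cr \<longleftrightarrow> \<pi> k < i" if k: "k < n" for k
    proof -
      have "k \<in> Cr \<or> k \<in> Dr" using CDn k by auto
      thus ?thesis
      proof
        assume kC: "k \<in> Cr"
        hence "\<pi> k \<in> {..<i}" using b1 by (rule bij_betw_apply[rotated])
        thus ?thesis using kC by simp
      next
        assume kD: "k \<in> Dr"
        hence "\<pi> k \<in> {i..<n}" using b2 by (rule bij_betw_apply[rotated])
        moreover have "k \<notin> Cr" using disj kD by auto
        ultimately show ?thesis by simp
      qed
    qed
    have pin: "\<pi> k < n" if "k < n" for k using bij that by (auto simp: bij_betw_def)
    have piinj: "\<pi> k = \<pi> j \<longleftrightarrow> k = j" for k j using perm by (metis permutes_inj injD)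
    have "Cr \<noteq> {}" using cC i1 by auto
    then obtain k1 where k1: "k1 \<in> Cr" by blast
    have "Dr \<noteq> {}" using cD iln by auto
    then obtain k2 where k2: "k2 \<in> Dr" by blast
    have ppos: "p > 0" using k1 rpos unfolding Cr_def pos_pt_def by auto
    have qpos: "q > 0" using k2 rpos unfolding Dr_def pos_pt_def by auto
    have \<rho>pos: "pos_pt n \<rho>" unfolding pos_pt_def \<rho>_def using ppos qpos by auto
    have Prr: "P r = P \<rho>" by (rule transfer_Pr[OF M perm rr])
    have \<rho>eq: "msrs_f l g h P \<sigma> a \<rho> = 0" if a: "a < n" for a
    proof -
      have "a \<in> \<pi> ` {..<n}" using permutes_image[OF perm] a by auto
      then obtain k where k: "k < n" "a = \<pi> k" by auto
      have "msrs_f l g h P \<sigma> a \<rho> = msrs_f l g h P \<sigma> k r"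
        unfolding msrs_f_def using rr k Prr by simp
      thus ?thesis using req k by simp
    qed
    define \<beta> where "\<beta> = partial (msrs_f l g h P \<sigma> 0) 0 \<rho>"
    define \<tau> where "\<tau> = partial (msrs_f l g h P \<sigma> (n - 1)) (n - 1) \<rho>"
    define \<gamma> where "\<gamma> = partial P 1 \<rho> / Dk l h P 0 \<rho>"
    define \<xi> where "\<xi> = partial P (n - 2) \<rho> / Dk l h P (n - 1) \<rho>"
    define \<mu> where "\<mu> = partial P (n - 1) \<rho> / Dk l h P 0 \<rho>"
    define \<nu> where "\<nu> = partial P 0 \<rho> / Dk l h P (n - 1) \<rho>"
    have Ediag: "partial (msrs_f l g h P \<sigma> a) a \<rho> = (if a < i then \<beta> else \<tau>)" if a: "a < n" for a
    proof (cases "a < i")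
      case True thus ?thesis unfolding \<beta>_def using partial_diag_eq[OF M a, of 0 \<rho> \<sigma>] i1 n2 by (simp add: \<rho>_def)
    next
      case False
      have "\<not> n - 1 < i" "n - 1 < n" using iln by auto
      thus ?thesis unfolding \<tau>_def using False partial_diag_eq[OF M a, of "n-1" \<rho> \<sigma>] by (simp add: \<rho>_def)
    qed
    have Eoff: "partial (msrs_f l g h P \<sigma> a) b \<rho> =
        (if b < i then (if a < i then \<gamma> else \<nu>) else (if a < i then \<mu> else \<xi>))"
      if a: "a < n" and b: "b < n" and ab: "a \<noteq> b" for a b
    proof -
      have po: "partial (msrs_f l g h P \<sigma> a) b \<rho> = partial P b \<rho> / Dk l h P a \<rho>"
        by (rule partial_off[OF M \<rho>pos a b ab \<rho>eq[OF a]])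
      show ?thesis
      proof (cases "b < i")
        case bT: True
        show ?thesis
        proof (cases "a < i")
          case aT: True
          have "1 < i" using aT bT ab by linarith
          thus ?thesis using po partialP_eq[OF M b, of 1 \<rho>] Dk_eq[of \<rho> a 0 l h P] aT bT iln
            unfolding \<gamma>_def by (simp add: \<rho>_def)
        next
          case aF: False
          thus ?thesis using po partialP_eq[OF M b, of 0 \<rho>] Dk_eq[of \<rho> a "n-1" l h P] bT a iln i1 nm1
            unfolding \<nu>_def by (simp add: \<rho>_def)
        qed
      next
        case bF: False
        show ?thesis
        proof (cases "a < i")
          case aT: True
          thus ?thesis using po partialP_eq[OF M b, of "n-1" \<rho>] Dk_eq[of \<rho> a 0 l h P] bF b iln nm1
            unfolding \<mu>_def by (simp add: \<rho>_def)
        next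
          case aF: False
          have "i \<le> n - 2" using aF bF a b ab by linarith
          hence "\<not> n - 2 < i" "\<not> n - Suc (Suc 0) < i" "n - 2 < n" "n - Suc (Suc 0) < n" using n2 by auto
          thus ?thesis using po partialP_eq[OF M b, of "n-2" \<rho>] Dk_eq[of \<rho> a "n-1" l h P] aF bF a b n2 iln nm1
            unfolding \<xi>_def by (simp add: \<rho>_def)
        qed
      qed
    qed
    have ent: "J $$ (k,j) = (if j = k then (if k \<in> Cr then of_real \<beta> else of_real \<tau>)
       else if j \<in> Cr then (if k \<in> Cr then of_real \<gamma> else of_real \<nu>)
       else (if k \<in> Cr then of_real \<mu> else of_real \<xi>))" if k: "k < n" and j: "j < n" for k j
    proof -
      have "J $$ (k,j) = of_real (partial (msrs_f l g h P \<sigma> (\<pi> k)) (\<pi> j) \<rho>)"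
        using Jent[OF k j] transfer_partial[OF M perm rr k j] by simp
      thus ?thesis using Ediag[OF pin[OF k]] Eoff[OF pin[OF k] pin[OF j]] piC[OF k] piC[OF j] piinj[of j k]
        by (cases "j = k") auto
    qed
    have res: "stable_eq n l g h P \<sigma> r \<longleftrightarrow>
      ((1 < i \<longrightarrow> \<beta> - \<gamma> < 0) \<and> (1 < n - i \<longrightarrow> \<tau> - \<xi> < 0) \<and>
       \<beta> + \<tau> + (real i - 1) * \<gamma> + (real n - real i - 1) * \<xi> < 0 \<and>
       (\<beta> + (real i - 1) * \<gamma>) * (\<tau> + (real n - real i - 1) * \<xi>) - real i * (real n - real i) * \<mu> * \<nu> > 0)"
      unfolding stab
      by (rule struct_stab[where C=Cr and A=J and b=\<beta> and t=\<tau> and g=\<gamma> and x=\<xi> and m=\<mu> and v=\<nu>])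
         (use CrS cC i1 iln Jc ent in auto)
    have ni: "2 \<le> i \<Longrightarrow> 1 < n - i" using ih by linarith
    have "(i = 1 \<and> n = 2 \<longrightarrow> (stable_eq n l g h P \<sigma> r \<longleftrightarrow>
            \<beta> + \<tau> + (real i - 1) * \<gamma> + (real n - real i - 1) * \<xi> < 0 \<and>
            (\<beta> + (real i - 1) * \<gamma>) * (\<tau> + (real n - real i - 1) * \<xi>) - real i * (real n - real i) * \<mu> * \<nu> > 0)) \<and>
          (i = 1 \<and> n > 2 \<longrightarrow> (stable_eq n l g h P \<sigma> r \<longleftrightarrow> \<tau> - \<xi> < 0 \<and>
            \<beta> + \<tau> + (real i - 1) * \<gamma> + (real n - real i - 1) * \<xi> < 0 \<and>
            (\<beta> + (real i - 1) * \<gamma>) * (\<tau> + (real n - real i - 1) * \<xi>) - real i * (real n - real i) * \<mu> * \<nu> > 0)) \<and>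
          (2 \<le> i \<longrightarrow> (stable_eq n l g h P \<sigma> r \<longleftrightarrow> \<tau> - \<xi> < 0 \<and> \<beta> - \<gamma> < 0 \<and>
            \<beta> + \<tau> + (real i - 1) * \<gamma> + (real n - real i - 1) * \<xi> < 0 \<and>
            (\<beta> + (real i - 1) * \<gamma>) * (\<tau> + (real n - real i - 1) * \<xi>) - real i * (real n - real i) * \<mu> * \<nu> > 0))"
      using res ni by auto
    thus "let \<rho> = (\<lambda>k. if k < i then p else q);
           \<beta> = partial (msrs_f l g h P \<sigma> 0) 0 \<rho>;
           \<tau> = partial (msrs_f l g h P \<sigma> (n - 1)) (n - 1) \<rho>;
           \<gamma> = partial P 1 \<rho> / Dk l h P 0 \<rho>;
           \<xi> = partial P (n - 2) \<rho> / Dk l h P (n - 1) \<rho>;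
           \<mu> = partial P (n - 1) \<rho> / Dk l h P 0 \<rho>;
           \<nu> = partial P 0 \<rho> / Dk l h P (n - 1) \<rho>;
           G1 = \<tau> - \<xi>;
           G2 = \<beta> - \<gamma>;
           G3 = \<beta> + \<tau> + (real i - 1) * \<gamma> + (real n - real i - 1) * \<xi>;
           G4 = (\<beta> + (real i - 1) * \<gamma>) * (\<tau> + (real n - real i - 1) * \<xi>)
                - real i * (real n - real i) * \<mu> * \<nu>
       in (i = 1 \<and> n = 2 \<longrightarrow> (stable_eq n l g h P \<sigma> r \<longleftrightarrow> G3 < 0 \<and> G4 > 0)) \<and>
          (i = 1 \<and> n > 2 \<longrightarrow> (stable_eq n l g h P \<sigma> r \<longleftrightarrow> G1 < 0 \<and> G3 < 0 \<and> G4 > 0)) \<and>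
          (2 \<le> i \<longrightarrow> (stable_eq n l g h P \<sigma> r \<longleftrightarrow> G1 < 0 \<and> G2 < 0 \<and> G3 < 0 \<and> G4 > 0))"
      unfolding Let_def \<beta>_def \<tau>_def \<gamma>_def \<xi>_def \<mu>_def \<nu>_def \<rho>_def .
  qed
  show ?thesis using part1 part2 by blast
qed


end
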